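(* A commutative ring $R$ is locally stable if and only if the formal power series ring $R[[X]]$ is locally stable.
   Context: All rings are commutative with identity. A ring $S$ has stable range 1 if whenever $aS+bS=S$ there is $y\in S$ with $a+by$ a unit. $S$ is locally stable if whenever $a,b\in S$ with $aS+bS=S$ there is $y\in S$ such that $S/(a+by)S$ has stable range 1. *)

theory Defs
  imports "HOL-Computational_Algebra.Formal_Power_Series"
begin

definition stable_range_1 :: "'a::comm_ring_1 itself \<Rightarrow> bool" where
  "stable_range_1 _ \<longleftrightarrow>
     (\<forall>a b :: 'a. (\<exists>u v. a * u + b * v = 1) \<longrightarrow> (\<exists>y. (a + b * y) dvd 1))"

text \<open>Stable range 1 of the quotient ring S/I, where I is an ideal of S (the type 'a).
  Elements of S/I are represented by elements of S; equality in S/I is congruence mod I.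
  So aS/I + bS/I = S/I iff au + bv - 1 \<in> I for some u, v, and a + by is a unit of S/I iff
  (a + by) z - 1 \<in> I for some z.\<close>
definition quotient_stable_range_1 :: "'a::comm_ring_1 set \<Rightarrow> bool" where
  "quotient_stable_range_1 I \<longleftrightarrow>
     (\<forall>a b :: 'a. (\<exists>u v. a * u + b * v - 1 \<in> I) \<longrightarrow> (\<exists>y z. (a + b * y) * z - 1 \<in> I))"

definition principal_ideal :: "'a::comm_ring_1 \<Rightarrow> 'a set" where
  "principal_ideal c = {c * s | s. True}"

definition locally_stable :: "'a::comm_ring_1 itself \<Rightarrow> bool" where
  "locally_stable _ \<longleftrightarrow>
     (\<forall>a b :: 'a. (\<exists>u v. a * u + b * v = 1) \<longrightarrow>
        (\<exists>y. quotient_stable_range_1 (principal_ideal (a + b * y))))"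

end

theory Submission
  imports Defs
begin

unbundle fps_syntax

lemma fps_unit_const1:
  fixes e :: "'a::comm_ring_1 fps"
  assumes "e $ 0 = 1"
  shows "\<exists>w. e * w = 1"
  using fps_right_inverse[of e 1] assms by auto

lemma ring_aux: "((x::'a::comm_ring_1) - h * t) * w = 1 \<Longrightarrow> x * w - 1 = h * (t * w)"
  by (simp add: algebra_simps)

lemma pi_mem: "x \<in> principal_ideal c \<longleftrightarrow> (\<exists>s. x = c * s)"
  unfolding principal_ideal_def by auto

lemma fwd:
  assumes LS: "locally_stable TYPE('a::comm_ring_1)"
  shows "locally_stable TYPE('a fps)"
  unfolding locally_stable_def
proof (intro allI impI)
  fix f g :: "'a fps"
  assume "\<exists>u v. f * u + g * v = 1"
  then obtain u v where uv: "f * u + g * v = 1" by blast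
  have "(f * u + g * v) $ 0 = 1" using uv by simp
  hence "f$0 * u$0 + g$0 * v$0 = 1" by simp
  then obtain y0 where y0: "quotient_stable_range_1 (principal_ideal (f$0 + g$0 * y0))"
    using LS unfolding locally_stable_def by blast
  define c where "c = f$0 + g$0 * y0"
  define h where "h = f + g * fps_const y0"
  have h0: "h $ 0 = c" unfolding h_def c_def by simp
  have "quotient_stable_range_1 (principal_ideal h)"
    unfolding quotient_stable_range_1_def
  proof (intro allI impI)
    fix a b :: "'a fps"
    assume "\<exists>U V. a * U + b * V - 1 \<in> principal_ideal h"
    then obtain U V s where s: "a * U + b * V - 1 = h * s" by (auto simp: pi_mem)
    have "(a * U + b * V - 1) $ 0 = (h * s) $ 0" using s by simp
    hence "a$0 * U$0 + b$0 * V$0 - 1 = c * s$0" using h0 by simp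
    hence "\<exists>u v. a$0 * u + b$0 * v - 1 \<in> principal_ideal c" by (auto simp: pi_mem)
    hence "\<exists>y z. (a$0 + b$0 * y) * z - 1 \<in> principal_ideal c"
      using y0 unfolding quotient_stable_range_1_def c_def[symmetric] by blast
    then obtain y1 z1 t where t: "(a$0 + b$0 * y1) * z1 - 1 = c * t"
      by (auto simp: pi_mem)
    define e where "e = (a + b * fps_const y1) * fps_const z1 - h * fps_const t"
    have "e $ 0 = (a$0 + b$0 * y1) * z1 - c * t" unfolding e_def using h0 by simp
    hence "e $ 0 = 1" using t[symmetric] by simp
    then obtain w where w: "e * w = 1" using fps_unit_const1 by blast
    have "(a + b * fps_const y1) * (fps_const z1 * w) - 1 = h * (fps_const t * w)"
      using ring_aux[OF w[unfolded e_def]] by (simp only: distrib_right mult.assoc)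
    thus "\<exists>y z. (a + b * y) * z - 1 \<in> principal_ideal h" by (auto simp: pi_mem)
  qed
  thus "\<exists>y. quotient_stable_range_1 (principal_ideal (f + g * y))"
    unfolding h_def by blast
qed

lemma bwd:
  assumes LS: "locally_stable TYPE('a::comm_ring_1 fps)"
  shows "locally_stable TYPE('a)"
  unfolding locally_stable_def
proof (intro allI impI)
  fix a b :: 'a
  assume "\<exists>u v. a * u + b * v = 1"
  then obtain u v where uv: "a * u + b * v = 1" by blast
  have "fps_const a * fps_const u + fps_const b * fps_const v = 1"
    using uv by (metis fps_const_add fps_const_mult fps_const_1_eq_1)
  then obtain Y where Y: "quotient_stable_range_1 (principal_ideal (fps_const a + fps_const b * Y))"
    using LS unfolding locally_stable_def by blast
  define h where "h = fps_const a + fps_const b * Y"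
  define c where "c = a + b * Y$0"
  have h0: "h $ 0 = c" unfolding h_def c_def by simp
  have "quotient_stable_range_1 (principal_ideal c)"
    unfolding quotient_stable_range_1_def
  proof (intro allI impI)
    fix p q :: 'a
    assume "\<exists>U V. p * U + q * V - 1 \<in> principal_ideal c"
    then obtain U V s where s: "p * U + q * V - 1 = c * s" by (auto simp: pi_mem)
    define e where "e = fps_const p * fps_const U + fps_const q * fps_const V - h * fps_const s"
    have "e $ 0 = p * U + q * V - c * s" unfolding e_def using h0 by simp
    hence "e $ 0 = 1" using s[symmetric] by simp
    then obtain w where w: "e * w = 1" using fps_unit_const1 by blast
    have "fps_const p * (fps_const U * w) + fps_const q * (fps_const V * w) - 1
          = h * (fps_const s * w)"
      using ring_aux[OF w[unfolded e_def]] by (simp only: distrib_right mult.assoc)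
    hence "\<exists>U V. fps_const p * U + fps_const q * V - 1 \<in> principal_ideal h"
      by (auto simp: pi_mem)
    hence "\<exists>y z. (fps_const p + fps_const q * y) * z - 1 \<in> principal_ideal h"
      using Y unfolding quotient_stable_range_1_def h_def[symmetric] by blast
    then obtain Y1 Z1 T where T: "(fps_const p + fps_const q * Y1) * Z1 - 1 = h * T"
      by (auto simp: pi_mem)
    have "((fps_const p + fps_const q * Y1) * Z1 - 1) $ 0 = (h * T) $ 0" using T by simp
    hence "(p + q * Y1$0) * Z1$0 - 1 = c * T$0" using h0 by simp
    thus "\<exists>y z. (p + q * y) * z - 1 \<in> principal_ideal c" by (auto simp: pi_mem)
  qed
  thus "\<exists>y. quotient_stable_range_1 (principal_ideal (a + b * y))"
    unfolding c_def by blast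
qed

theorem corollary2p6:
  shows "locally_stable TYPE('a::comm_ring_1) \<longleftrightarrow> locally_stable TYPE('a fps)"
  using fwd bwd by blast

end
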